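(* Let $k\ge 1$, $0\le r<k$ and $n\ge1$ be integers, and let $$B_n(k,r,x;q)=\left(\begin{bmatrix} i-k+r+1\\ i-j\end{bmatrix}_q x^k+q^{(k-1)j}\begin{bmatrix} i+r+1\\ i-j+1\end{bmatrix}_q\right)_{i,j=0}^{n-1}.$$ Then $x^r\det B_n(k,r,x;q)=F^{(k)}_{kn+r}(x;q)$.
   Context: Here $q$ is an indeterminate and all quantities lie in $\mathbb{Q}(q)[x]$. The $q$-binomial coefficient is defined for integers $m$ (possibly negative) and $j$ by $\begin{bmatrix} m\\ j\end{bmatrix}_q=\prod_{t=0}^{j-1}\frac{1-q^{m-t}}{1-q^{t+1}}$ if $j\ge0$ and $0$ if $j<0$. For an integer $k\ge1$, the $q$-Fibonacci polynomials $F^{(k)}_n(x;q)$ ($n\ge0$) are defined by $F^{(k)}_n(x;q)=x^n$ for $0\le n<k$ and $F^{(k)}_{n+k}(x;q)=xF^{(k)}_{n+k-1}(x;q)+q^nF^{(k)}_n(x;q)$ for $n\ge0$. *)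

theory Defs
  imports "Jordan_Normal_Form.Determinant" "HOL-Computational_Algebra.Fraction_Field"
    "HOL-Computational_Algebra.Polynomial"
begin

definition qbinom :: "'a::field \<Rightarrow> int \<Rightarrow> int \<Rightarrow> 'a" where
  "qbinom q m j = (if j < 0 then 0 else
     (\<Prod>t<nat j. (1 - q powi (m - int t)) / (1 - q ^ (t + 1))))"

function qfib :: "nat \<Rightarrow> 'a::comm_ring_1 \<Rightarrow> 'a \<Rightarrow> nat \<Rightarrow> 'a" where
  "qfib k q x n = (if n < k \<or> k = 0 then x ^ n
      else x * qfib k q x (n - 1) + q ^ (n - k) * qfib k q x (n - k))"
  by auto
termination by (relation "measure (\<lambda>(k,q,x,n). n)") auto

definition qq :: "rat poly fract" where "qq = Fract [:0, 1:] 1"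

definition xx :: "rat poly fract poly" where "xx = [:0, 1:]"

end

theory Submission
  imports Defs
begin


fun trn :: "nat \<Rightarrow> int" where
  "trn 0 = 0" | "trn (Suc n) = trn n + int n"

lemma trn_add: "trn (a + b) = trn a + trn b + int a * int b"
  by (induction b) (auto simp: algebra_simps)

lemma qbinom_neg: "j < 0 \<Longrightarrow> qbinom q M j = 0"
  unfolding qbinom_def by simp

lemma qbinom_nat: "qbinom q M (int l) = (\<Prod>t<l. (1 - q powi (M - int t)) / (1 - q ^ (t + 1)))"
  unfolding qbinom_def by simp

lemma qbinom_0[simp]: "qbinom q M 0 = 1"
  unfolding qbinom_def by simp

locale qctx =
  fixes q :: "'a::field"
  assumes q0: "q \<noteq> 0" and qn: "\<And>n::nat. n > 0 \<Longrightarrow> q ^ n \<noteq> 1"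
begin

abbreviation g :: "int \<Rightarrow> nat \<Rightarrow> 'a" where "g M l \<equiv> qbinom q M (int l)"

definition num :: "int \<Rightarrow> nat \<Rightarrow> 'a" where "num M l = (\<Prod>t<l. 1 - q powi (M - int t))"
definition den :: "nat \<Rightarrow> 'a" where "den l = (\<Prod>t<l. 1 - q ^ (t+1))"

lemma pw: "q powi a * q powi b = q powi (a + b)"
  using q0 by (simp add: power_int_add)

lemma pwn: "q ^ n = q powi (int n)" by simp

lemma E_nz: "1 - q ^ (Suc t) \<noteq> 0"
  using qn[of "Suc t"] by auto

lemma den_nz: "den l \<noteq> 0"
  unfolding den_def using E_nz by (auto simp: prod_zero_iff)

lemma g_eq: "g M l = num M l / den l"
  unfolding qbinom_nat num_def den_def by (simp add: prod_dividef)

lemma num_Suc: "num M (Suc l) = num M l * (1 - q powi (M - int l))"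
  unfolding num_def by simp

lemma num_Suc': "num M (Suc l) = (1 - q powi M) * num (M - 1) l"
  unfolding num_def prod.lessThan_Suc_shift by (simp add: algebra_simps)

lemma den_Suc: "den (Suc l) = den l * (1 - q ^ (Suc l))"
  unfolding den_def by simp

lemma aux1: "(D::'b::field) \<noteq> 0 \<Longrightarrow> E \<noteq> 0 \<Longrightarrow> NM = N1 + a*N0*E \<Longrightarrow> NM/(D*E) = N1/(D*E) + a*(N0/D)"
  by (simp add: field_simps)

lemma aux2: "(D::'b::field) \<noteq> 0 \<Longrightarrow> E \<noteq> 0 \<Longrightarrow> NM = b * N1 + N0*E \<Longrightarrow> NM/(D*E) = b * (N1/(D*E)) + N0/D"
  by (simp add: field_simps)

lemma pascal1: "g M (Suc l) = g (M - 1) (Suc l) + q powi (M - 1 - int l) * g (M - 1) l"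
proof -
  have e: "q powi (M - 1 - int l) * q ^ Suc l = q powi M"
    unfolding pwn pw by simp
  have n1: "num M (Suc l) = (1 - q powi M) * num (M-1) l" by (rule num_Suc')
  have n2: "num (M-1) (Suc l) = num (M-1) l * (1 - q powi (M-1-int l))" by (rule num_Suc)
  have "num M (Suc l) = num (M-1) (Suc l) + q powi (M - 1 - int l) * num (M - 1) l * (1 - q ^ Suc l)"
    unfolding n1 n2 e[symmetric] by (simp add: algebra_simps)
  then show ?thesis unfolding g_eq den_Suc using den_nz E_nz
    by (intro aux1)
qed

lemma pascal2: "g M (Suc l) = q ^ (Suc l) * g (M - 1) (Suc l) + g (M - 1) l"
proof -
  have e: "q powi (M - 1 - int l) * q ^ Suc l = q powi M"
    unfolding pwn pw by simp
  have n1: "num M (Suc l) = (1 - q powi M) * num (M-1) l" by (rule num_Suc')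
  have n2: "num (M-1) (Suc l) = num (M-1) l * (1 - q powi (M-1-int l))" by (rule num_Suc)
  have "num M (Suc l) = q ^ Suc l * num (M-1) (Suc l) + num (M - 1) l * (1 - q ^ Suc l)"
    unfolding n1 n2 e[symmetric] by (simp add: algebra_simps)
  then show ?thesis unfolding g_eq den_Suc using den_nz E_nz
    by (intro aux2)
qed

lemma gzero: "0 \<le> M \<Longrightarrow> M < int l \<Longrightarrow> g M l = 0"
proof -
  assume a: "0 \<le> M" "M < int l"
  have "num M l = 0" unfolding num_def
    by (rule prod_zero) (use a in \<open>auto intro!: bexI[of _ "nat M"]\<close>)
  then show ?thesis unfolding g_eq by simp
qed


lemma pwn_mult: "q ^ n * q powi e = q powi (int n + e)"
  unfolding pwn pw ..

lemma aux3: "X * P = Y * P' \<Longrightarrow> (X * gA + gB) * gb * P = Y * (gA * gb * P') + gB * gb * (P::'a)"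
proof -
  assume h: "X * P = Y * P'"
  have "(X * gA + gB) * gb * P = gA * gb * (X * P) + gB * gb * P" by (simp add: algebra_simps)
  then show ?thesis unfolding h by (simp add: algebra_simps)
qed

definition R :: "int \<Rightarrow> int \<Rightarrow> nat \<Rightarrow> 'a" where
  "R a b N = (\<Sum>l\<le>N. g a (N - l) * g b l * q powi (int l * (a - int N + int l)))"

lemma vstep: "R (a+1) b (Suc N) = q ^ Suc N * R a b (Suc N) + R a b N"
proof -
  have t1: "g (a+1) (Suc N - l) * g b l * q powi (int l * (a + 1 - int (Suc N) + int l)) =
     q ^ Suc N * (g a (Suc N - l) * g b l * q powi (int l * (a - int (Suc N) + int l)))
     + g a (N - l) * g b l * q powi (int l * (a - int N + int l))" if l: "l \<le> N" for l
  proof -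
    have p: "g (a+1) (Suc N - l) = q ^ Suc (N-l) * g a (Suc N - l) + g a (N-l)"
      using pascal2[of "a+1" "N-l"] l by (simp add: Suc_diff_le)
    have e0: "int l * (a + 1 - int (Suc N) + int l) = int l * (a - int N + int l)" by simp
    have e: "q ^ Suc (N-l) * q powi (int l * (a - int N + int l)) = q ^ Suc N * q powi (int l * (a - int (Suc N) + int l))"
      unfolding pwn_mult by (rule arg_cong[where f="power_int q"]) (use l in \<open>simp add: of_nat_diff algebra_simps\<close>)
    show ?thesis unfolding e0 p by (rule aux3[OF e])
  qed
  have t2: "g (a+1) (Suc N - Suc N) * g b (Suc N) * q powi (int (Suc N) * (a + 1 - int (Suc N) + int (Suc N))) =
     q ^ Suc N * (g a (Suc N - Suc N) * g b (Suc N) * q powi (int (Suc N) * (a - int (Suc N) + int (Suc N))))"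
  proof -
    have e: "q ^ Suc N * q powi (int (Suc N) * (a - int (Suc N) + int (Suc N))) = q powi (int (Suc N) * (a + 1 - int (Suc N) + int (Suc N)))"
      unfolding pwn_mult by (rule arg_cong[where f="power_int q"]) (simp add: algebra_simps)
    have "g (a+1) (Suc N - Suc N) * g b (Suc N) * q powi (int (Suc N) * (a + 1 - int (Suc N) + int (Suc N)))
      = g b (Suc N) * q powi (int (Suc N) * (a + 1 - int (Suc N) + int (Suc N)))" by simp
    also have "\<dots> = g b (Suc N) * (q ^ Suc N * q powi (int (Suc N) * (a - int (Suc N) + int (Suc N))))"
      by (simp only: e)
    also have "\<dots> = q ^ Suc N * (g a (Suc N - Suc N) * g b (Suc N) * q powi (int (Suc N) * (a - int (Suc N) + int (Suc N))))"
      by simp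
    finally show ?thesis .
  qed
  have "R (a+1) b (Suc N) = (\<Sum>l\<le>N. q ^ Suc N * (g a (Suc N - l) * g b l * q powi (int l * (a - int (Suc N) + int l)))
     + g a (N - l) * g b l * q powi (int l * (a - int N + int l))) + 
     q ^ Suc N * (g a (Suc N - Suc N) * g b (Suc N) * q powi (int (Suc N) * (a - int (Suc N) + int (Suc N))))"
    unfolding R_def sum.atMost_Suc t2[symmetric] using t1 by simp
  also have "\<dots> = q ^ Suc N * R a b (Suc N) + R a b N"
    unfolding R_def sum.atMost_Suc[of _ N] sum.distrib distrib_left sum_distrib_left[symmetric] by (simp add: algebra_simps)
  finally show ?thesis .
qed

lemma vbase: "g b N = R 0 b N"
proof -
  have "R 0 b N = g 0 (N - N) * g b N * q powi (int N * (0 - int N + int N))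
     + (\<Sum>l\<in>{..N} - {N}. g 0 (N - l) * g b l * q powi (int l * (0 - int N + int l)))"
    unfolding R_def by (subst sum.remove[of _ N]) auto
  also have "(\<Sum>l\<in>{..N} - {N}. g 0 (N - l) * g b l * q powi (int l * (0 - int N + int l))) = 0"
  proof (rule sum.neutral, rule ballI)
    fix l assume "l \<in> {..N} - {N}"
    then have "g 0 (N - l) = 0" by (intro gzero) auto
    then show "g 0 (N - l) * g b l * q powi (int l * (0 - int N + int l)) = 0" by simp
  qed
  finally show ?thesis by simp
qed

lemma vand: "g (a + b) N = R a b N"
proof (induction a arbitrary: N rule: int_induct[where k=0])
  case base
  then show ?case using vbase by simp
next
  case (step1 i)
  show ?case
  proof (cases N)
    case 0 then show ?thesis by (simp add: R_def)
  next
    case (Suc N')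
    have "g (i + 1 + b) (Suc N') = q ^ Suc N' * g (i + b) (Suc N') + g (i+b) N'"
      using pascal2[of "i+1+b" N'] by simp
    then show ?thesis by (simp only: Suc step1.IH vstep)
  qed
next
  case (step2 i)
  have "g (i - 1 + b) N = R (i - 1) b N" for N
  proof (induction N)
    case 0 then show ?case by (simp add: R_def)
  next
    case (Suc N')
    have "g (i - 1 + 1 + b) (Suc N') = q ^ Suc N' * g (i - 1 + b) (Suc N') + g (i - 1 + b) N'"
      using pascal2[of "i-1+1+b" N'] by (simp add: algebra_simps)
    moreover have "R (i - 1 + 1) b (Suc N') = q ^ Suc N' * R (i-1) b (Suc N') + R (i-1) b N'"
      by (rule vstep)
    ultimately have "q ^ Suc N' * g (i - 1 + b) (Suc N') = q ^ Suc N' * R (i-1) b (Suc N')"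
      using step2.IH[of "Suc N'"] Suc.IH by simp
    then show ?case using q0 by simp
  qed
  then show ?case .
qed

lemma num_neg: "num (A + int l) l = (-1)^l * q powi ((A+1) * int l + trn l) * num (-A-1) l"
proof (induction l)
  case 0 then show ?case by (simp add: num_def)
next
  case (Suc l)
  have h: "num (A + int (Suc l)) (Suc l) = (1 - q powi (A + int (Suc l))) * num (A + int l) l"
    using num_Suc'[of "A + int (Suc l)" l] by simp
  have e1: "q powi ((A+1) * int (Suc l) + trn (Suc l)) = q powi ((A+1) * int l + trn l) * q powi (A + 1 + int l)"
    unfolding pw by (simp add: algebra_simps)
  have e2: "q powi (A + 1 + int l) * q powi (- A - 1 - int l) = 1"
    unfolding pw by simp
  have "num (A + int (Suc l)) (Suc l) = (-1)^l * q powi ((A+1) * int l + trn l) * num (-A-1) l * (1 - q powi (A + 1 + int l))"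
    unfolding h Suc.IH by (simp add: algebra_simps)
  also have "\<dots> = (-1)^(Suc l) * q powi ((A+1) * int (Suc l) + trn (Suc l)) * (num (-A-1) l * (1 - q powi (- A - 1 - int l)))"
    unfolding e1 using e2 by (simp add: algebra_simps)
  also have "num (-A-1) l * (1 - q powi (- A - 1 - int l)) = num (-A-1) (Suc l)"
    by (simp add: num_Suc)
  finally show ?case .
qed

lemma g_neg: "g (A + int l) l = (-1)^l * q powi ((A+1) * int l + trn l) * g (-A-1) l"
  unfolding g_eq num_neg by simp

lemma VN: "(\<Sum>l\<le>N. g a (N - l) * g (A + int l) l * (-1)^l * q powi (int l * (a - int N + int l) - (A+1) * int l - trn l))
   = g (a - A - 1) N"
proof -
  have "g a (N - l) * g (A + int l) l * (-1)^l * q powi (int l * (a - int N + int l) - (A+1) * int l - trn l)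
      = g a (N - l) * g (-A-1) l * q powi (int l * (a - int N + int l))" for l
  proof -
    have e: "q powi ((A+1) * int l + trn l) * q powi (int l * (a - int N + int l) - (A+1) * int l - trn l) = q powi (int l * (a - int N + int l))"
      unfolding pw by simp
    have s: "((-1::'a)^l) * (-1)^l = 1" by (simp flip: power_mult_distrib)
    show ?thesis unfolding g_neg using e s
      by (simp add: algebra_simps)
  qed
  then have "(\<Sum>l\<le>N. g a (N - l) * g (A + int l) l * (-1)^l * q powi (int l * (a - int N + int l) - (A+1) * int l - trn l))
    = R a (-A-1) N" unfolding R_def by (intro sum.cong) blast+
  also have "\<dots> = g (a - A - 1) N" using vand[of a "-A-1" N] by (simp add: algebra_simps)
  finally show ?thesis .
qed
end


context qctx begin

definition ce :: "nat \<Rightarrow> nat \<Rightarrow> nat \<Rightarrow> 'a" where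
  "ce k n l = q powi (int k * trn l) * g (int n - (int k - 1) * int l) l"

lemma ce0[simp]: "ce k n 0 = 1" unfolding ce_def by simp

lemma ce_Suc: "k \<ge> 1 \<Longrightarrow> n \<ge> k \<Longrightarrow> ce k n (Suc l) = ce k (n-1) (Suc l) + q ^ (n - k) * ce k (n - k) l"
proof -
  assume k: "k \<ge> 1" and n: "n \<ge> k"
  define M where "M = int n - (int k - 1) * int (Suc l)"
  have p: "g M (Suc l) = g (M-1) (Suc l) + q powi (M - 1 - int l) * g (M-1) l" by (rule pascal1)
  have m1: "M - 1 = int (n-1) - (int k - 1) * int (Suc l)" using k n unfolding M_def by (simp add: of_nat_diff)
  have m2: "M - 1 = int (n-k) - (int k - 1) * int l" using k n unfolding M_def by (simp add: of_nat_diff algebra_simps)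
  have e: "q powi (int k * trn (Suc l)) * q powi (M - 1 - int l) = q ^ (n - k) * q powi (int k * trn l)"
    unfolding pw pwn pw using k n unfolding M_def by (simp add: of_nat_diff algebra_simps)
  have "ce k n (Suc l) = q powi (int k * trn (Suc l)) * g M (Suc l)" unfolding ce_def M_def ..
  also have "\<dots> = q powi (int k * trn (Suc l)) * g (M-1) (Suc l) + (q powi (int k * trn (Suc l)) * q powi (M - 1 - int l)) * g (M-1) l"
    unfolding p by (simp add: algebra_simps)
  also have "\<dots> = ce k (n-1) (Suc l) + q ^ (n - k) * ce k (n - k) l"
    unfolding e ce_def m1[symmetric] m2[symmetric] by (simp add: algebra_simps)
  finally show ?thesis .
qed

lemma F_expl: "k \<ge> 1 \<Longrightarrow> qfib k [:q:] x n = (\<Sum>l\<le>n div k. smult (ce k n l) (x ^ (n - k*l)))"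
proof (induction n rule: less_induct)
  case (less n)
  note k = \<open>k \<ge> 1\<close>
  show ?case
  proof (cases "n < k")
    case True
    then show ?thesis by (subst qfib.simps) simp
  next
    case False
    then have nk: "n \<ge> k" by simp
    define d' where "d' = n div k - 1"
    have "0 < n div k" using nk k by (simp add: div_greater_zero_iff)
    then have dd: "n div k = Suc d'" unfolding d'_def by simp
    have dk: "(n - k) div k = d'" unfolding d'_def using nk k le_div_geq[of k n] by simp
    have F: "qfib k [:q:] x n = x * qfib k [:q:] x (n-1) + [:q:] ^ (n - k) * qfib k [:q:] x (n - k)"
      using nk k by (subst qfib.simps) simp
    have IH1: "qfib k [:q:] x (n-1) = (\<Sum>l\<le>(n-1) div k. smult (ce k (n-1) l) (x ^ (n - 1 - k*l)))"
      using less.IH[of "n-1"] k nk by simp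
    have IH2: "qfib k [:q:] x (n-k) = (\<Sum>l\<le>d'. smult (ce k (n-k) l) (x ^ (n - k - k*l)))"
      using less.IH[of "n-k"] k nk dk by simp
    have S1: "x * qfib k [:q:] x (n-1) = (\<Sum>l\<le>n div k. smult (ce k (n-1) l) (x ^ (n - k*l)))"
    proof -
      have "x * qfib k [:q:] x (n-1) = (\<Sum>l\<le>(n-1) div k. smult (ce k (n-1) l) (x ^ (n - k*l)))"
        unfolding IH1 sum_distrib_left
      proof (rule sum.cong[OF refl])
        fix l assume l: "l \<in> {..(n-1) div k}"
        have a: "k * l \<le> k * ((n-1) div k)" using l by simp
        have b: "k * ((n-1) div k) \<le> n - 1" using div_times_less_eq_dividend[of "n-1" k] by (simp add: mult.commute)
        have "n - k*l = Suc (n - 1 - k*l)" using a b nk k by linarith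
        then have "x * x ^ (n - 1 - k*l) = x ^ (n - k*l)" by simp
        then show "x * smult (ce k (n-1) l) (x ^ (n - 1 - k*l)) = smult (ce k (n-1) l) (x ^ (n - k*l))"
          by (simp add: mult_smult_right)
      qed
      also have "\<dots> = (\<Sum>l\<le>n div k. smult (ce k (n-1) l) (x ^ (n - k*l)))"
      proof (rule sum.mono_neutral_left)
        show "{..(n-1) div k} \<subseteq> {..n div k}" by (simp add: div_le_mono)
        show "\<forall>i\<in>{..n div k} - {..(n - 1) div k}. smult (ce k (n - 1) i) (x ^ (n - k * i)) = 0"
        proof
          fix l assume l: "l \<in> {..n div k} - {..(n - 1) div k}"
          then have a0: "k * l \<le> k * (n div k)" by simp
          have b0: "k * (n div k) \<le> n" using div_times_less_eq_dividend[of n k] by (simp add: mult.commute)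
          have a: "k * l \<le> n" using a0 b0 by linarith
          from l have "(n-1) div k < l" by auto
          then have b: "n - 1 < k * l" using div_less_iff_less_mult[of k "n-1" l] k by (simp add: mult.commute)
          have kl: "k * l = n" using a b by simp
          have l1: "l \<ge> 1" using kl nk k by (cases l) auto
          have "int (n-1) - (int k - 1) * int l = int l - 1" using kl l1 nk k
            by (simp add: of_nat_diff algebra_simps flip: kl)
          then have "ce k (n-1) l = 0" unfolding ce_def using gzero[of "int l - 1" l] l1 by simp
          then show "smult (ce k (n - 1) l) (x ^ (n - k * l)) = 0" by simp
        qed
      qed auto
      finally show ?thesis .
    qed
    have S2: "[:q:] ^ (n - k) * qfib k [:q:] x (n - k) = (\<Sum>l\<le>d'. smult (q ^ (n-k) * ce k (n-k) l) (x ^ (n - k * Suc l)))"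
      unfolding IH2 poly_const_pow sum_distrib_left
      by (rule sum.cong[OF refl]) (simp add: algebra_simps diff_diff_add)
    have "(\<Sum>l\<le>n div k. smult (ce k n l) (x ^ (n - k*l)))
       = smult (ce k n 0) (x ^ n) + (\<Sum>l\<le>d'. smult (ce k n (Suc l)) (x ^ (n - k * Suc l)))"
      unfolding dd sum.atMost_Suc_shift by simp
    also have "\<dots> = smult (ce k (n-1) 0) (x ^ n) + (\<Sum>l\<le>d'. smult (ce k (n-1) (Suc l)) (x ^ (n - k * Suc l)))
        + (\<Sum>l\<le>d'. smult (q ^ (n-k) * ce k (n-k) l) (x ^ (n - k * Suc l)))"
      unfolding ce_Suc[OF k nk] smult_add_left sum.distrib by simp
    also have "\<dots> = x * qfib k [:q:] x (n-1) + [:q:] ^ (n - k) * qfib k [:q:] x (n - k)"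
      unfolding S1 S2 dd sum.atMost_Suc_shift by simp
    finally show ?thesis using F by simp
  qed
qed

end

declare qfib.simps[simp del]


lemma trn2: "2 * trn l = int l * (int l - 1)"
  by (induction l) (auto simp: algebra_simps)

lemma tri_reindex: "(\<Sum>j\<le>(N::nat). \<Sum>l\<le>j. h j l) = (\<Sum>t\<le>N. \<Sum>l\<le>N-t. h (t+l) l)"
proof -
  have "(\<Sum>j\<le>N. \<Sum>l\<le>j. h j l) = (\<Sum>(j,l)\<in>Sigma {..N} (\<lambda>j. {..j}). h j l)" by (subst sum.Sigma) auto
  also have "\<dots> = (\<Sum>(t,l)\<in>Sigma {..N} (\<lambda>t. {..N-t}). h (t+l) l)"
    by (rule sum.reindex_bij_witness[where i="\<lambda>(t,l). (t+l,l)" and j="\<lambda>(j,l). (j-l,l)"]) auto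
  also have "\<dots> = (\<Sum>t\<le>N. \<Sum>l\<le>N-t. h (t+l) l)" by (subst sum.Sigma) auto
  finally show ?thesis .
qed

context qctx begin

definition om :: "nat \<Rightarrow> nat \<Rightarrow> 'a" where
  "om k j = (-1)^j * q powi (-(int (k-1) * (trn j + int j)))"

definition AA :: "nat \<Rightarrow> nat \<Rightarrow> nat \<Rightarrow> nat \<Rightarrow> 'a" where
  "AA k r m j = qbinom q (int m - int k + int r + 1) (int m - int j) * om k j"

definition BB :: "nat \<Rightarrow> nat \<Rightarrow> nat \<Rightarrow> nat \<Rightarrow> 'a" where
  "BB k r m j = q ^ ((k-1)*j) * qbinom q (int m + int r + 1) (int m - int j + 1) * om k j"

lemma CA_closed:
  assumes k: "k \<ge> 1" and t: "t \<le> m"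
  shows "(\<Sum>l\<le>m - t. AA k r m (t+l) * ce k (k*(t+l)+r) l)
     = (-1)^t * q powi (- (int k - 1) * trn (Suc t)) * g (int m - int k * int (Suc t)) (m - t)"
proof -
  define a where "a = int m - int k + int r + 1"
  define A where "A = int k * int t + int r"
  define N where "N = m - t"
  have tm: "AA k r m (t+l) * ce k (k*(t+l)+r) l = (-1)^t * q powi (- (int k - 1) * trn (Suc t)) *
     (g a (N - l) * g (A + int l) l * (-1)^l * q powi (int l * (a - int N + int l) - (A+1) * int l - trn l))"
    if l: "l \<le> N" for l
  proof -
    have i1: "int m - int (t + l) = int (N - l)" using l t unfolding N_def by simp
    have i2: "int (k * (t + l) + r) - (int k - 1) * int l = A + int l" unfolding A_def by (simp add: algebra_simps)
    have ex: "- (int (k-1) * (trn (t+l) + int (t+l))) + int k * trn l =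
       - (int k - 1) * trn (Suc t) + (int l * (a - int N + int l) - (A+1) * int l - trn l)"
    proof -
      have nN: "int N = int m - int t" using t unfolding N_def by simp
      have hk: "int (k-1) = int k - 1" using k by simp
      show ?thesis unfolding a_def A_def nN hk trn_add trn.simps of_nat_add using trn2[of l] by (simp add: algebra_simps)
    qed
    have s: "(-1::'a)^(t+l) = (-1)^t * (-1)^l" by (simp add: power_add)
    have "AA k r m (t+l) * ce k (k*(t+l)+r) l = (-1)^(t+l) * (g a (N - l) * g (A + int l) l) *
       (q powi (- (int (k-1) * (trn (t+l) + int (t+l)))) * q powi (int k * trn l))"
      unfolding AA_def om_def ce_def i1 i2 a_def by (simp add: algebra_simps)
    also have "\<dots> = (-1)^(t+l) * (g a (N - l) * g (A + int l) l) *
       (q powi (- (int k - 1) * trn (Suc t)) * q powi (int l * (a - int N + int l) - (A+1) * int l - trn l))"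
      unfolding pw ex ..
    finally show ?thesis unfolding s by (simp add: algebra_simps)
  qed
  have "(\<Sum>l\<le>m - t. AA k r m (t+l) * ce k (k*(t+l)+r) l) = (-1)^t * q powi (- (int k - 1) * trn (Suc t)) *
     (\<Sum>l\<le>N. g a (N - l) * g (A + int l) l * (-1)^l * q powi (int l * (a - int N + int l) - (A+1) * int l - trn l))"
    unfolding sum_distrib_left N_def using tm unfolding N_def by (intro sum.cong) auto
  also have "\<dots> = (-1)^t * q powi (- (int k - 1) * trn (Suc t)) * g (a - A - 1) N" unfolding VN ..
  also have "a - A - 1 = int m - int k * int (Suc t)" unfolding a_def A_def by (simp add: algebra_simps)
  finally show ?thesis unfolding N_def .
qed

lemma CB_closed:
  assumes k: "k \<ge> 1" and t: "t \<le> Suc m"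
  shows "(\<Sum>l\<le>Suc m - t. BB k r m (t+l) * ce k (k*(t+l)+r) l)
     = (-1)^t * q powi (- (int k - 1) * trn t) * g (int m - int k * int t) (Suc m - t)"
proof -
  define a where "a = int m + int r + 1"
  define A where "A = int k * int t + int r"
  define N where "N = Suc m - t"
  have tm: "BB k r m (t+l) * ce k (k*(t+l)+r) l = (-1)^t * q powi (- (int k - 1) * trn t) *
     (g a (N - l) * g (A + int l) l * (-1)^l * q powi (int l * (a - int N + int l) - (A+1) * int l - trn l))"
    if l: "l \<le> N" for l
  proof -
    have i1: "int m - int (t + l) + 1 = int (N - l)" using l t unfolding N_def by simp
    have i2: "int (k * (t + l) + r) - (int k - 1) * int l = A + int l" unfolding A_def by (simp add: algebra_simps)
    have ex: "int ((k-1)*(t+l)) + (- (int (k-1) * (trn (t+l) + int (t+l))) + int k * trn l) =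
       - (int k - 1) * trn t + (int l * (a - int N + int l) - (A+1) * int l - trn l)"
    proof -
      have nN: "int N = int m + 1 - int t" using t unfolding N_def by simp
      have hk: "int (k-1) = int k - 1" using k by simp
      have hk2: "int ((k-1)*(t+l)) = (int k - 1) * (int t + int l)" using k by (simp add: of_nat_diff)
      show ?thesis unfolding a_def A_def nN hk hk2 trn_add of_nat_add using trn2[of l] by (simp add: algebra_simps)
    qed
    have s: "(-1::'a)^(t+l) = (-1)^t * (-1)^l" by (simp add: power_add)
    have "BB k r m (t+l) * ce k (k*(t+l)+r) l = (-1)^(t+l) * (g a (N - l) * g (A + int l) l) *
       (q ^ ((k-1)*(t+l)) * (q powi (- (int (k-1) * (trn (t+l) + int (t+l)))) * q powi (int k * trn l)))"
      unfolding BB_def om_def ce_def i1 i2 a_def by (simp add: algebra_simps)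
    also have "\<dots> = (-1)^(t+l) * (g a (N - l) * g (A + int l) l) *
       (q powi (- (int k - 1) * trn t) * q powi (int l * (a - int N + int l) - (A+1) * int l - trn l))"
      unfolding pw pwn ex ..
    finally show ?thesis unfolding s by (simp add: algebra_simps)
  qed
  have "(\<Sum>l\<le>Suc m - t. BB k r m (t+l) * ce k (k*(t+l)+r) l) = (-1)^t * q powi (- (int k - 1) * trn t) *
     (\<Sum>l\<le>N. g a (N - l) * g (A + int l) l * (-1)^l * q powi (int l * (a - int N + int l) - (A+1) * int l - trn l))"
    unfolding sum_distrib_left N_def using tm unfolding N_def by (intro sum.cong) auto
  also have "\<dots> = (-1)^t * q powi (- (int k - 1) * trn t) * g (a - A - 1) N" unfolding VN ..
  also have "a - A - 1 = int m - int k * int t" unfolding a_def A_def by (simp add: algebra_simps)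
  finally show ?thesis unfolding N_def .
qed

end



context qctx begin

definition aent :: "nat \<Rightarrow> nat \<Rightarrow> nat \<Rightarrow> nat \<Rightarrow> 'a poly \<Rightarrow> 'a poly" where
  "aent k r m j x = [: qbinom q (int m - int k + int r + 1) (int m - int j) :] * x ^ k
     + [: q ^ ((k - 1) * j) * qbinom q (int m + int r + 1) (int m - int j + 1) :]"

definition ww :: "nat \<Rightarrow> nat \<Rightarrow> 'a poly \<Rightarrow> nat \<Rightarrow> 'a poly" where
  "ww k r x j = smult (om k j) (qfib k [:q:] x (k*j + r))"

lemma smult_sum2: "smult a (\<Sum>i\<in>S. f i) = (\<Sum>i\<in>S. smult a (f i))"
  by (induction S rule: infinite_finite_induct) (auto simp: smult_add_right)

lemma AA_last: "AA k r m (Suc m) = 0"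
  unfolding AA_def by (simp add: qbinom_neg)

lemma row_id:
  assumes k: "k \<ge> 1" and r: "r < k"
  shows "(\<Sum>j<Suc (Suc m). aent k r m j x * ww k r x j) = 0"
proof -
  define h where "h = (\<lambda>j l. smult (AA k r m j * ce k (k*j+r) l) (x^(k*(j-l+1)+r))
     + smult (BB k r m j * ce k (k*j+r) l) (x^(k*(j-l)+r)))"
  define CA where "CA = (\<lambda>t. \<Sum>l\<le>Suc m - t. AA k r m (t+l) * ce k (k*(t+l)+r) l)"
  define CB where "CB = (\<lambda>t. \<Sum>l\<le>Suc m - t. BB k r m (t+l) * ce k (k*(t+l)+r) l)"
  have Fj: "qfib k [:q:] x (k*j + r) = (\<Sum>l\<le>j. smult (ce k (k*j+r) l) (x^(k*(j-l)+r)))" for j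
  proof -
    have d: "(k*j + r) div k = j" using k r by simp
    show ?thesis unfolding F_expl[OF k] d
      by (rule sum.cong[OF refl]) (simp add: diff_mult_distrib2 algebra_simps)
  qed
  have xFj: "x^k * qfib k [:q:] x (k*j + r) = (\<Sum>l\<le>j. smult (ce k (k*j+r) l) (x^(k*(j-l+1)+r)))" for j
    unfolding Fj sum_distrib_left
  proof (rule sum.cong[OF refl])
    fix l assume "l \<in> {..j}"
    have "k * (j - l + 1) + r = k + (k * (j - l) + r)" by simp
    then show "x ^ k * smult (ce k (k * j + r) l) (x ^ (k * (j - l) + r)) = smult (ce k (k * j + r) l) (x ^ (k * (j - l + 1) + r))"
      by (simp add: power_add mult_smult_right mult.assoc)
  qed
  have S1: "aent k r m j x * ww k r x j = (\<Sum>l\<le>j. h j l)" for j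
  proof -
    have "aent k r m j x * ww k r x j = smult (AA k r m j) (x^k * qfib k [:q:] x (k*j + r)) + smult (BB k r m j) (qfib k [:q:] x (k*j + r))"
      unfolding aent_def ww_def AA_def BB_def by (simp add: algebra_simps mult_smult_right mult_smult_left)
    also have "\<dots> = (\<Sum>l\<le>j. h j l)"
      unfolding xFj unfolding Fj h_def sum.distrib smult_sum2 by simp
    finally show ?thesis .
  qed
  have "(\<Sum>j<Suc (Suc m). aent k r m j x * ww k r x j) = (\<Sum>j\<le>Suc m. \<Sum>l\<le>j. h j l)"
    unfolding S1 lessThan_Suc_atMost ..
  also have "\<dots> = (\<Sum>t\<le>Suc m. \<Sum>l\<le>Suc m - t. h (t+l) l)" by (rule tri_reindex)
  also have "\<dots> = (\<Sum>t\<le>Suc m. smult (CA t) (x^(k*Suc t + r)) + smult (CB t) (x^(k*t+r)))"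
    unfolding CA_def CB_def h_def sum.distrib smult_sum by simp
  also have "\<dots> = (\<Sum>t\<le>Suc m. smult (CA t) (x^(k*Suc t + r))) + (\<Sum>t\<le>Suc m. smult (CB t) (x^(k*t+r)))"
    by (rule sum.distrib)
  also have "(\<Sum>t\<le>Suc m. smult (CA t) (x^(k*Suc t + r))) = (\<Sum>t\<le>m. smult (CA t) (x^(k*Suc t + r)))"
  proof -
    have "CA (Suc m) = 0" unfolding CA_def by (simp add: AA_last)
    then show ?thesis by simp
  qed
  also have "(\<Sum>t\<le>Suc m. smult (CB t) (x^(k*t+r))) = (\<Sum>t\<le>m. smult (- CA t) (x^(k*Suc t + r)))"
  proof -
    have "CB 0 = (-1)^0 * q powi (- (int k - 1) * trn 0) * g (int m - int k * int 0) (Suc m - 0)"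
      unfolding CB_def by (rule CB_closed[OF k]) simp
    then have c0: "CB 0 = 0" using gzero[of "int m" "Suc m"] by simp
    have cs: "CB (Suc t) = - CA t" if t: "t \<le> m" for t
    proof -
      have "CA t = (\<Sum>l\<le>m - t. AA k r m (t+l) * ce k (k*(t+l)+r) l)"
        unfolding CA_def using t by (simp add: Suc_diff_le AA_last)
      also have "\<dots> = (-1)^t * q powi (- (int k - 1) * trn (Suc t)) * g (int m - int k * int (Suc t)) (m - t)"
        by (rule CA_closed[OF k t])
      finally show ?thesis unfolding CB_def CB_closed[OF k, of "Suc t" m, OF Suc_le_mono[THEN iffD2, OF t]]
        by simp
    qed
    show ?thesis unfolding sum.atMost_Suc_shift c0 using cs by simp
  qed
  finally show ?thesis by (simp add: sum.distrib[symmetric] smult_add_left[symmetric])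
qed

end

lemma prod_diag: "prod_list (diag_mat (mat n n f)) = (\<Prod>i<n. f (i,i))"
proof -
  have "prod_list (diag_mat (mat n n f)) = prod_list (map (\<lambda>i. f (i,i)) [0..<n])"
    unfolding diag_mat_def by (intro arg_cong[where f=prod_list] map_cong) auto
  also have "\<dots> = (\<Prod>i\<in>set [0..<n]. f (i,i))" by (rule prod.distinct_set_conv_list[symmetric]) simp
  finally show ?thesis by (simp add: atLeast0LessThan)
qed

lemma aux_sm: "smult s (F::'a::field poly) * ((-1)^N * [:d:]) = smult (s * ((-1)^N * d)) F"
proof -
  have "((-1)^N * [:d:] :: 'a poly) = [:(-1)^N * d:]"
    by (induction N) auto
  then show ?thesis by (simp add: mult.commute)
qed

lemma ac5: "(- (A * (B * C))) * (D * E) = - ((D * B) * (A * E * (C::'a::comm_ring)))"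
  by (simp add: algebra_simps)

lemma aux_sm2: "- ([:a:] * smult b (F::'a::field poly)) = smult (- (a * b)) F"
  by (simp add: mult.commute)

context qctx begin

lemma aent_zero: "Suc (Suc i) \<le> j \<Longrightarrow> aent k r i j x = 0"
  unfolding aent_def by (simp add: qbinom_neg)

lemma aent_diag: "aent k r i (Suc i) x = [: q ^ ((k-1) * Suc i) :]"
  unfolding aent_def by (simp add: qbinom_neg)

lemma prod_q: "(\<Prod>i<N. q ^ (c * Suc i)) = q powi (int c * trn (Suc N))"
proof (induction N)
  case 0 then show ?case by simp
next
  case (Suc N)
  have "q powi (int c * trn (Suc N)) * q ^ (c * Suc N) = q powi (int c * trn (Suc (Suc N)))"
    unfolding pwn pw by (simp add: algebra_simps)
  then show ?case using Suc by simp
qed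

lemma det_main:
  assumes k: "k \<ge> 1" and r: "r < k" and n: "n \<ge> 1"
  shows "x ^ r * det (mat n n (\<lambda>(i,j). aent k r i j x)) = qfib k [:q:] x (k * n + r)"
proof -
  define B where "B = mat n n (\<lambda>(i,j). aent k r i j x)"
  define U where "U = mat n n (\<lambda>(i,j). if j = 0 then ww k r x i else if i = j then 1 else 0)"
  define C where "C = B * U"
  obtain N where nN: "n = Suc N" using n by (cases n) auto
  have Bc: "B \<in> carrier_mat n n" and Uc: "U \<in> carrier_mat n n" and Cc: "C \<in> carrier_mat n n"
    unfolding B_def U_def C_def by auto
  have w0: "ww k r x 0 = x ^ r" unfolding ww_def om_def using r by (subst qfib.simps) simp
  have detU: "det U = x ^ r"
  proof -
    have "det U = prod_list (diag_mat U)"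
      by (rule det_lower_triangular[OF _ Uc]) (auto simp: U_def)
    also have "\<dots> = (\<Prod>i<n. if i = 0 then ww k r x i else 1)" unfolding U_def prod_diag
      by (intro prod.cong) auto
    also have "\<dots> = ww k r x 0" using n by (simp add: prod.If_cases lessThan_def)
    finally show ?thesis using w0 by simp
  qed
  have C0: "C $$ (i, 0) = (\<Sum>j<n. aent k r i j x * ww k r x j)" if i: "i < n" for i
    unfolding C_def using i n unfolding B_def U_def
    by (auto simp: atLeast0LessThan scalar_prod_def intro!: sum.cong)
  have Cj: "C $$ (i, Suc j) = aent k r i (Suc j) x" if i: "i < n" and j: "Suc j < n" for i j
  proof -
    have "C $$ (i, Suc j) = (\<Sum>l\<in>{0..<n}. aent k r i l x * (if l = Suc j then 1 else 0))"
      unfolding C_def using i j unfolding B_def U_def by (auto simp: scalar_prod_def intro!: sum.cong)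
    also have "\<dots> = aent k r i (Suc j) x" using j by (simp add: if_distrib cong: if_cong)
    finally show ?thesis .
  qed
  have Czero: "C $$ (i, 0) = 0" if i: "i < N" for i
  proof -
    have iN: "i < n" using i nN by simp
    have "C $$ (i, 0) = (\<Sum>j<Suc (Suc i). aent k r i j x * ww k r x j)"
      unfolding C0[OF iN] using i nN
      by (intro sum.mono_neutral_right) (auto simp: aent_zero)
    also have "\<dots> = 0" by (rule row_id[OF k r])
    finally show ?thesis .
  qed
  have NN: "N < n" using nN by simp
  have Clast: "C $$ (N, 0) = - ([: q ^ ((k-1) * n) :] * ww k r x n)"
  proof -
    have "(\<Sum>j<Suc (Suc N). aent k r N j x * ww k r x j) = 0" by (rule row_id[OF k r])
    then have "C $$ (N, 0) + aent k r N n x * ww k r x n = 0"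
      unfolding C0[of N, OF NN] using nN by simp
    then show ?thesis unfolding nN aent_diag by (simp add: eq_neg_iff_add_eq_0)
  qed
  have "det C = (\<Sum>i<n. C $$ (i,0) * cofactor C i 0)"
    by (rule laplace_expansion_column[OF Cc]) (use n in simp)
  also have "\<dots> = C $$ (N,0) * cofactor C N 0"
    unfolding nN lessThan_Suc using Czero by simp
  also have "cofactor C N 0 = (-1)^N * [: q powi (int (k-1) * trn n) :]"
  proof -
    define D where "D = mat_delete C N 0"
    have D: "D = mat N N (\<lambda>(i,j). aent k r i (Suc j) x)"
      unfolding D_def mat_delete_def using Cc nN by (auto simp: Cj)
    have "det D = prod_list (diag_mat D)"
      by (rule det_lower_triangular[where n=N]) (auto simp: D aent_zero)
    also have "\<dots> = (\<Prod>i<N. [: q ^ ((k-1) * Suc i) :])" unfolding D prod_diag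
      by (intro prod.cong) (auto simp: aent_diag)
    also have "\<dots> = [: \<Prod>i<N. q ^ ((k-1) * Suc i) :]"
      by (induction N) (auto simp: mult.commute)
    finally show ?thesis unfolding cofactor_def D_def[symmetric] prod_q nN by simp
  qed
  also have "C $$ (N,0) * ((-1)^N * [: q powi (int (k-1) * trn n) :]) = qfib k [:q:] x (k * n + r)"
  proof -
    define E1 where "E1 = -(int (k-1) * (trn n + int n))"
    define E2 where "E2 = int (k-1) * trn n"
    have e: "q ^ ((k-1) * n) * q powi E2 * q powi E1 = 1"
      unfolding E1_def E2_def by (simp only: pwn pw of_nat_mult) (simp add: algebra_simps)
    have s: "(-1::'a)^N * (-1)^n = - 1" unfolding nN by (simp flip: power_add add: power_Suc)
    have sc: "(- (q ^ ((k-1) * n) * ((-1)^n * q powi E1))) * ((-1)^N * q powi E2) = 1"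
    proof -
      have "(- (q ^ ((k-1) * n) * ((-1)^n * q powi E1))) * ((-1)^N * q powi E2) =
        - (((-1)^N * (-1)^n) * (q ^ ((k-1) * n) * q powi E2 * q powi E1))" by (rule ac5)
      then show ?thesis unfolding s e by simp
    qed
    have "C $$ (N,0) * ((-1)^N * [: q powi (int (k-1) * trn n) :]) =
       smult ((- (q ^ ((k-1) * n) * ((-1)^n * q powi E1))) * ((-1)^N * q powi E2)) (qfib k [:q:] x (k * n + r))"
      unfolding Clast ww_def om_def E1_def[symmetric] E2_def[symmetric] aux_sm2 aux_sm ..
    then show ?thesis unfolding sc by simp
  qed
  finally have "det C = qfib k [:q:] x (k * n + r)" .
  moreover have "det C = det B * det U" unfolding C_def by (rule det_mult[OF Bc Uc])
  ultimately show ?thesis unfolding detU B_def by (simp add: mult.commute)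
qed

end



lemma qq_pow: "qq ^ n = Fract ([:0, 1:] ^ n) 1"
  by (induction n) (auto simp: qq_def mult_fract One_fract_def)
lemma qq_ne0: "qq \<noteq> 0"
  unfolding qq_def Zero_fract_def by (simp add: eq_fract)
lemma qq_pow_ne1: "n > 0 \<Longrightarrow> qq ^ n \<noteq> 1"
proof
  assume n: "n > 0" and h: "qq ^ n = 1"
  have "(Fract ([:0, 1:] ^ n) 1 :: rat poly fract) = Fract 1 1" using h qq_pow[of n] One_fract_def by metis
  then have "([:0, 1:] :: rat poly) ^ n * 1 = 1 * 1" by (subst (asm) eq_fract(1)) auto
  then have "degree (([:0, 1:] :: rat poly) ^ n) = 0" by (metis degree_1 mult_1_right)
  then show False using n degree_linear_power[of "0::rat" n] by simp
qed

interpretation QQ: qctx qq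
  by unfold_locales (use qq_ne0 qq_pow_ne1 in auto)

theorem theorem6:
  fixes k r n :: nat
  assumes "k \<ge> 1" and "r < k" and "n \<ge> 1"
  shows "xx ^ r * det (mat n n (\<lambda>(i, j).
            [: qbinom qq (int i - int k + int r + 1) (int i - int j) :] * xx ^ k
          + [: qq ^ ((k - 1) * j) * qbinom qq (int i + int r + 1) (int i - int j + 1) :]))
         = qfib k [: qq :] xx (k * n + r)"
  using QQ.det_main[OF assms, of xx] unfolding QQ.aent_def .

end
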